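(* Let $\mu,\lambda\in A_2$ and let $\varphi\in L^1(\mathbb{T})$ be such that its Poisson extension to $\mathbb{D}$ is analytic or anti-analytic. Let $dv_1(z)=|\nabla\varphi(z)|^2\log\frac{1}{|z|}\,dA(z)$ and $dv_2(z)=|\nabla\varphi(z)|^2(1-|z|^2)\,dA(z)$. Then $dv_1$ is $\lambda$-$\mu$ Carleson if and only if $dv_2$ is $\lambda$-$\mu$ Carleson.
   Context: $\mathbb{T}$ is the unit circle, $\mathbb{D}$ the unit disc, $dm$ normalized arc length measure, $dA$ normalized area measure on $\mathbb{D}$. A weight $w\ge0$ is in $A_2$ if $\sup_{I}\big(\frac{1}{|I|}\int_I w\,dm\big)\big(\frac{1}{|I|}\int_I w^{-1}dm\big)<\infty$ over subarcs $I\subset\mathbb{T}$. $P_z(\zeta)=\frac{1-|z|^2}{|1-\bar z\zeta|^2}$ is the Poisson kernel and $u(z)=\int_{\mathbb{T}}uP_z\,dm$ the Poisson extension of an integrable $u$ on $\mathbb{T}$; $\varphi(z)$ denotes the Poisson extension of $\varphi$. A nonnegative measure $\tau$ on $\mathbb{D}$ is called $\lambda$-$\mu$ Carleson if $\sup_{z\in\mathbb{D}}\frac{1}{\mu(z)}\int_{\mathbb{D}}P_z(\zeta)\lambda(\zeta)\,d\tau(\zeta)<\infty$ (equivalently, $\int_{\mathbb{D}}|f|^2\lambda\,d\tau\le B\int_{\mathbb{T}}|f|^2\mu\,dm$ for all $f\in L^2(\mathbb{T},\mu\,dm)$, with $f,\lambda,\mu$ Poisson-extended to $\mathbb{D}$).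 *)

theory Defs
  imports "HOL-Analysis.Analysis"
begin

text \<open>Functions on the unit circle T are functions on complex numbers, evaluated at cis t,
  t in [0, 2 pi]. Normalized arc length measure dm = dt / (2 pi).\<close>

definition poisson_kernel :: "complex \<Rightarrow> complex \<Rightarrow> real" where
  "poisson_kernel z \<zeta> = (1 - (cmod z)\<^sup>2) / (cmod (1 - cnj z * \<zeta>))\<^sup>2"

definition poisson_ext :: "(complex \<Rightarrow> 'a::{banach, second_countable_topology}) \<Rightarrow> complex \<Rightarrow> 'a" where
  "poisson_ext u z = (1 / (2 * pi)) *\<^sub>R
     (LINT t:{0..2*pi}|lborel. poisson_kernel z (cis t) *\<^sub>R u (cis t))"

definition L1_circle :: "(complex \<Rightarrow> 'a::{banach, second_countable_topology}) \<Rightarrow> bool" where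
  "L1_circle u \<longleftrightarrow> set_integrable lborel {0..2*pi} (\<lambda>t. u (cis t))"

text \<open>Average of a nonnegative function over the subarc {cis t | a <= t <= b}
  (the normalizations of dm and |I| cancel).\<close>
definition arc_avg :: "(complex \<Rightarrow> ennreal) \<Rightarrow> real \<Rightarrow> real \<Rightarrow> ennreal" where
  "arc_avg w a b = (\<integral>\<^sup>+ t\<in>{a..b}. w (cis t) \<partial>lborel) / ennreal (b - a)"

definition A2_weight :: "(complex \<Rightarrow> real) \<Rightarrow> bool" where
  "A2_weight w \<longleftrightarrow>
     (\<lambda>t. w (cis t)) \<in> borel_measurable lborel \<and>
     (\<forall>t. w (cis t) \<ge> 0) \<and>
     (\<exists>C::real. \<forall>a b. a < b \<and> b - a \<le> 2 * pi \<longrightarrow>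
        arc_avg (\<lambda>\<zeta>. ennreal (w \<zeta>)) a b * arc_avg (\<lambda>\<zeta>. inverse (ennreal (w \<zeta>))) a b
          \<le> ennreal C)"

definition area_disc :: "complex measure" where
  "area_disc = density lborel (\<lambda>z. indicator (ball 0 1) z / ennreal pi)"

definition carleson :: "(complex \<Rightarrow> real) \<Rightarrow> (complex \<Rightarrow> real) \<Rightarrow> complex measure \<Rightarrow> bool" where
  "carleson lam mu \<tau> \<longleftrightarrow>
     (\<exists>C::real. \<forall>z\<in>ball 0 1.
        (\<integral>\<^sup>+ \<zeta>\<in>ball 0 1. ennreal (poisson_kernel z \<zeta> * poisson_ext lam \<zeta>) \<partial>\<tau>)
          \<le> ennreal (C * poisson_ext mu z))"

definition grad_sq :: "(complex \<Rightarrow> complex) \<Rightarrow> complex \<Rightarrow> real" where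
  "grad_sq F z =
     (cmod (vector_derivative (\<lambda>s::real. F (z + of_real s)) (at 0)))\<^sup>2 +
     (cmod (vector_derivative (\<lambda>s::real. F (z + \<i> * of_real s)) (at 0)))\<^sup>2"

end

theory Submission
  imports Defs "HOL-Complex_Analysis.Complex_Analysis"
begin


lemma meas_cnj[measurable]: "f \<in> borel_measurable M \<Longrightarrow> (\<lambda>x. cnj (f x)) \<in> borel_measurable M"
  by (rule borel_measurable_continuous_on[of cnj]) (auto intro!: continuous_intros)
lemma meas_cis[measurable]: "f \<in> borel_measurable M \<Longrightarrow> (\<lambda>x. cis (f x)) \<in> borel_measurable M"
  by (rule borel_measurable_continuous_on[of cis]) (auto intro!: continuous_intros)

lemma meas_pk: "(\<lambda>\<zeta>. poisson_kernel z \<zeta>) \<in> borel_measurable borel"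
  unfolding poisson_kernel_def by measurable

lemma meas_pext:
  fixes w :: "complex \<Rightarrow> real"
  assumes [measurable]: "(\<lambda>t. w (cis t)) \<in> borel_measurable lborel"
  shows "poisson_ext w \<in> borel_measurable borel"
proof -
  have [measurable]: "(\<lambda>(z,t). poisson_kernel z (cis t)) \<in> borel_measurable (borel \<Otimes>\<^sub>M lborel)"
    unfolding poisson_kernel_def by measurable
  have [measurable]: "(\<lambda>(z::complex,t). w (cis t)) \<in> borel_measurable (borel \<Otimes>\<^sub>M lborel)"
    by measurable
  show ?thesis unfolding poisson_ext_def set_lebesgue_integral_def
    by measurable
qed


lemma pk_0[simp]: "poisson_kernel 0 \<zeta> = 1"
  by (simp add: poisson_kernel_def)

lemma pk_nonneg: "cmod z \<le> 1 \<Longrightarrow> 0 \<le> poisson_kernel z \<zeta>"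
  unfolding poisson_kernel_def
  by (intro divide_nonneg_nonneg) (auto simp: power_le_one)

lemma denom_lower:
  assumes "cmod z * cmod \<zeta> < 1"
  shows "1 - cmod z * cmod \<zeta> \<le> cmod (1 - cnj z * \<zeta>)"
proof -
  have "cmod (cnj z * \<zeta>) = cmod z * cmod \<zeta>" by (simp add: norm_mult)
  moreover have "1 - cmod (cnj z * \<zeta>) \<le> cmod (1 - cnj z * \<zeta>)"
    using norm_triangle_ineq2[of 1 "cnj z * \<zeta>"] by simp
  ultimately show ?thesis by simp
qed

lemma denom_upper: "cmod (1 - cnj z * \<zeta>) \<le> 1 + cmod z * cmod \<zeta>"
proof -
  have "cmod (1 - cnj z * \<zeta>) \<le> cmod (1::complex) + cmod (cnj z * \<zeta>)" by (rule norm_triangle_ineq4)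
  then show ?thesis by (simp add: norm_mult)
qed

lemma pk_upper_small:
  assumes z: "cmod z < 1" and ze: "cmod \<zeta> \<le> 1/2"
  shows "poisson_kernel z \<zeta> \<le> 8 * (1 - cmod z)"
proof -
  have p: "cmod z * cmod \<zeta> \<le> 1/2"
    using z ze mult_mono[of "cmod z" 1 "cmod \<zeta>" "1/2"] by simp
  have d: "1/2 \<le> cmod (1 - cnj z * \<zeta>)" using denom_lower[of z \<zeta>] p by simp
  have d2: "1/4 \<le> (cmod (1 - cnj z * \<zeta>))\<^sup>2"
    using power_mono[OF d, of 2] by (simp add: power2_eq_square)
  have n: "0 \<le> 1 - (cmod z)\<^sup>2" using z by (simp add: abs_square_le_1 power_le_one)
  have p: "0 < cmod (1 - cnj z * \<zeta>)" using d by linarith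
  have dpos: "0 < (cmod (1 - cnj z * \<zeta>))\<^sup>2 * (1/4)" by (intro mult_pos_pos zero_less_power p) simp
  have "poisson_kernel z \<zeta> \<le> (1 - (cmod z)\<^sup>2) / (1/4)"
    unfolding poisson_kernel_def by (rule divide_left_mono[OF d2 n dpos])
  also have "\<dots> = 4 * (1 - cmod z) * (1 + cmod z)" by (simp add: power2_eq_square algebra_simps)
  also have "\<dots> \<le> 4 * (1 - cmod z) * 2" using z by (intro mult_left_mono) auto
  finally show ?thesis by simp
qed

lemma pk_circle_upper:
  assumes ze: "cmod \<zeta> \<le> 1/2"
  shows "poisson_kernel \<zeta> (cis t) \<le> 4"
proof -
  have d: "1/2 \<le> cmod (1 - cnj \<zeta> * cis t)" using denom_lower[of \<zeta> "cis t"] ze by simp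
  have d2: "1/4 \<le> (cmod (1 - cnj \<zeta> * cis t))\<^sup>2"
    using power_mono[OF d, of 2] by (simp add: power2_eq_square)
  have n: "0 \<le> 1 - (cmod \<zeta>)\<^sup>2" using ze by (simp add: abs_square_le_1 power_le_one)
  have p: "0 < cmod (1 - cnj \<zeta> * cis t)" using d by linarith
  have dpos: "0 < (cmod (1 - cnj \<zeta> * cis t))\<^sup>2 * (1/4)" by (intro mult_pos_pos zero_less_power p) simp
  have "poisson_kernel \<zeta> (cis t) \<le> (1 - (cmod \<zeta>)\<^sup>2) / (1/4)"
    unfolding poisson_kernel_def by (rule divide_left_mono[OF d2 n dpos])
  also have "\<dots> \<le> 4" by (simp add: power2_eq_square)
  finally show ?thesis .
qed

lemma pk_circle_lower:
  assumes z: "cmod z < 1"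
  shows "(1 - cmod z) / 2 \<le> poisson_kernel z (cis t)"
proof -
  have d: "cmod (1 - cnj z * cis t) \<le> 1 + cmod z" using denom_upper[of z "cis t"] by simp
  have d1: "1 - cmod z \<le> cmod (1 - cnj z * cis t)" using denom_lower[of z "cis t"] z by simp
  have d0: "0 < cmod (1 - cnj z * cis t)" using d1 z by linarith
  have d2: "(cmod (1 - cnj z * cis t))\<^sup>2 \<le> (1 + cmod z)^2"
    using power_mono[OF d, of 2] by simp
  have n: "0 \<le> 1 - (cmod z)\<^sup>2" using z by (simp add: abs_square_le_1 power_le_one)
  have zp: "0 < (1 + cmod z)^2" by (smt (verit) norm_ge_zero zero_less_power)
  have "(1 - (cmod z)\<^sup>2) / (1 + cmod z)^2 \<le> poisson_kernel z (cis t)"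
    unfolding poisson_kernel_def by (rule divide_left_mono[OF d2 n], rule mult_pos_pos[OF zp]) (use d0 in simp)
  moreover have "(1 - (cmod z)\<^sup>2) / (1 + cmod z)^2 = ((1 - cmod z) * (1 + cmod z)) / ((1 + cmod z) * (1 + cmod z))"
    by (simp add: power2_eq_square algebra_simps)
  moreover have "\<dots> = (1 - cmod z) / (1 + cmod z)" using zp by simp
  moreover have "(1 - cmod z) / 2 \<le> (1 - cmod z) / (1 + cmod z)"
    by (intro divide_left_mono; use z norm_ge_zero[of z] in \<open>auto intro: add_pos_nonneg\<close>)
  ultimately show ?thesis by linarith
qed

lemma pk_circle_upper2:
  assumes z: "cmod z < 1"
  shows "poisson_kernel z (cis t) \<le> 2 / (1 - cmod z)"
proof -
  have d: "1 - cmod z \<le> cmod (1 - cnj z * cis t)" using denom_lower[of z "cis t"] z by simp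
  have d2: "(1 - cmod z)^2 \<le> (cmod (1 - cnj z * cis t))\<^sup>2"
    using power_mono[OF d, of 2] z by simp
  have n: "0 \<le> 1 - (cmod z)\<^sup>2" using z by (simp add: abs_square_le_1 power_le_one)
  have "poisson_kernel z (cis t) \<le> (1 - (cmod z)\<^sup>2) / (1 - cmod z)^2"
    unfolding poisson_kernel_def by (rule divide_left_mono[OF d2 n]) (use z d in \<open>auto intro!: mult_pos_pos\<close>)
  also have "\<dots> = ((1 + cmod z) * (1 - cmod z)) / ((1 - cmod z) * (1 - cmod z))"
    by (simp add: power2_eq_square algebra_simps)
  also have "\<dots> = (1 + cmod z) / (1 - cmod z)"
    using z by simp
  also have "\<dots> \<le> 2 / (1 - cmod z)" using z by (intro divide_right_mono) auto
  finally show ?thesis .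
qed



lemma pext_int_iff:
  fixes w :: "complex \<Rightarrow> real"
  assumes meas[measurable]: "(\<lambda>t. w (cis t)) \<in> borel_measurable lborel"
    and z: "cmod z < 1"
  shows "set_integrable lborel {0..2*pi} (\<lambda>t. poisson_kernel z (cis t) *\<^sub>R w (cis t))
     \<longleftrightarrow> set_integrable lborel {0..2*pi} (\<lambda>t. w (cis t))"
proof -
  have mk[measurable]: "(\<lambda>t. poisson_kernel z (cis t)) \<in> borel_measurable lborel"
    unfolding poisson_kernel_def by measurable
  have c: "0 < 1 - cmod z" using z by simp
  show ?thesis
  proof
    assume i: "set_integrable lborel {0..2*pi} (\<lambda>t. poisson_kernel z (cis t) *\<^sub>R w (cis t))"
    have i2: "set_integrable lborel {0..2*pi} (\<lambda>t. (2 / (1 - cmod z)) * (poisson_kernel z (cis t) *\<^sub>R w (cis t)))"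
      using i by simp
    show "set_integrable lborel {0..2*pi} (\<lambda>t. w (cis t))"
    proof (rule set_integrable_bound[OF i2])
      show "set_borel_measurable lborel {0..2*pi} (\<lambda>t. w (cis t))"
        unfolding set_borel_measurable_def by measurable
      show "AE x in lborel. x \<in> {0..2*pi} \<longrightarrow> norm (w (cis x)) \<le> norm (2 / (1 - cmod z) * (poisson_kernel z (cis x) *\<^sub>R w (cis x)))"
      proof (intro AE_I2 impI)
        fix t
        have l: "(1 - cmod z) / 2 \<le> poisson_kernel z (cis t)" by (rule pk_circle_lower[OF z])
        have "1 \<le> 2 / (1 - cmod z) * poisson_kernel z (cis t)"
          using l c by (simp add: field_simps)
        then have "1 * \<bar>w (cis t)\<bar> \<le> (2 / (1 - cmod z) * poisson_kernel z (cis t)) * \<bar>w (cis t)\<bar>"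
          by (rule mult_right_mono) simp
        then have "\<bar>w (cis t)\<bar> \<le> (2 / (1 - cmod z) * poisson_kernel z (cis t)) * \<bar>w (cis t)\<bar>"
          by simp
        also have "\<dots> = norm (2 / (1 - cmod z) * (poisson_kernel z (cis t) *\<^sub>R w (cis t)))"
          using c pk_nonneg[of z "cis t"] z by (simp add: abs_mult)
        finally show "norm (w (cis t)) \<le> norm (2 / (1 - cmod z) * (poisson_kernel z (cis t) *\<^sub>R w (cis t)))"
          by simp
      qed
    qed
  next
    assume i: "set_integrable lborel {0..2*pi} (\<lambda>t. w (cis t))"
    have i2: "set_integrable lborel {0..2*pi} (\<lambda>t. (2 / (1 - cmod z)) * w (cis t))"
      using i by simp
    show "set_integrable lborel {0..2*pi} (\<lambda>t. poisson_kernel z (cis t) *\<^sub>R w (cis t))"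
    proof (rule set_integrable_bound[OF i2])
      show "set_borel_measurable lborel {0..2*pi} (\<lambda>t. poisson_kernel z (cis t) *\<^sub>R w (cis t))"
        unfolding set_borel_measurable_def by measurable
      show "AE x in lborel. x \<in> {0..2*pi} \<longrightarrow> norm (poisson_kernel z (cis x) *\<^sub>R w (cis x)) \<le> norm (2 / (1 - cmod z) * w (cis x))"
      proof (intro AE_I2 impI)
        fix t
        have u: "poisson_kernel z (cis t) \<le> 2 / (1 - cmod z)" by (rule pk_circle_upper2[OF z])
        have "norm (poisson_kernel z (cis t) *\<^sub>R w (cis t)) = poisson_kernel z (cis t) * \<bar>w (cis t)\<bar>"
          using pk_nonneg[of z "cis t"] z by (simp add: abs_mult)
        also have "\<dots> \<le> 2 / (1 - cmod z) * \<bar>w (cis t)\<bar>"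
          by (rule mult_right_mono[OF u]) simp
        also have "\<dots> = norm (2 / (1 - cmod z) * w (cis t))"
          using c by (simp add: abs_mult)
        finally show "norm (poisson_kernel z (cis t) *\<^sub>R w (cis t)) \<le> norm (2 / (1 - cmod z) * w (cis t))" .
      qed
    qed
  qed
qed

lemma pext_nonneg:
  fixes w :: "complex \<Rightarrow> real"
  assumes nn: "\<And>t. 0 \<le> w (cis t)" and z: "cmod z \<le> 1"
  shows "0 \<le> poisson_ext w z"
  unfolding poisson_ext_def set_lebesgue_integral_def
  using nn pk_nonneg[OF z]
  by (auto intro!: integral_nonneg simp: indicator_def)

lemma pext_compare:
  fixes w :: "complex \<Rightarrow> real"
  assumes meas[measurable]: "(\<lambda>t. w (cis t)) \<in> borel_measurable lborel"
    and nn: "\<And>t. 0 \<le> w (cis t)"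
    and z1: "cmod z1 < 1" and z2: "cmod z2 < 1" and a: "0 \<le> a"
    and le: "\<And>t. poisson_kernel z1 (cis t) \<le> a * poisson_kernel z2 (cis t)"
  shows "poisson_ext w z1 \<le> a * poisson_ext w z2"
proof (cases "set_integrable lborel {0..2*pi} (\<lambda>t. w (cis t))")
  case True
  have i1: "set_integrable lborel {0..2*pi} (\<lambda>t. poisson_kernel z1 (cis t) *\<^sub>R w (cis t))"
    using pext_int_iff[OF meas z1] True by simp
  have i2: "set_integrable lborel {0..2*pi} (\<lambda>t. poisson_kernel z2 (cis t) *\<^sub>R w (cis t))"
    using pext_int_iff[OF meas z2] True by simp
  have i2': "set_integrable lborel {0..2*pi} (\<lambda>t. a * (poisson_kernel z2 (cis t) *\<^sub>R w (cis t)))"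
    using i2 by simp
  have "(LINT t:{0..2*pi}|lborel. poisson_kernel z1 (cis t) *\<^sub>R w (cis t))
      \<le> (LINT t:{0..2*pi}|lborel. a * (poisson_kernel z2 (cis t) *\<^sub>R w (cis t)))"
  proof (rule set_integral_mono[OF i1 i2'])
    fix t
    show "poisson_kernel z1 (cis t) *\<^sub>R w (cis t) \<le> a * (poisson_kernel z2 (cis t) *\<^sub>R w (cis t))"
      using mult_right_mono[OF le[of t] nn[of t]] by (simp add: mult.assoc)
  qed
  also have "\<dots> = a * (LINT t:{0..2*pi}|lborel. poisson_kernel z2 (cis t) *\<^sub>R w (cis t))"
    by (rule set_integral_mult_right)
  finally show ?thesis unfolding poisson_ext_def
    by (simp add: field_simps divide_right_mono)
next
  case False
  have "\<not> set_integrable lborel {0..2*pi} (\<lambda>t. poisson_kernel z1 (cis t) *\<^sub>R w (cis t))"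
    using pext_int_iff[OF meas z1] False by simp
  then have "poisson_ext w z1 = 0"
    unfolding poisson_ext_def set_lebesgue_integral_def set_integrable_def
    by (simp add: not_integrable_integral_eq)
  moreover have "0 \<le> poisson_ext w z2" using pext_nonneg[of w, OF nn] z2 by simp
  ultimately show ?thesis using a by simp
qed



lemma vd_line:
  assumes H: "H holomorphic_on ball 0 1" and z: "z \<in> ball 0 1"
  shows "((\<lambda>s::real. H (z + c * of_real s)) has_vector_derivative (c * deriv H z)) (at 0)"
proof -
  have Df: "((\<lambda>s::real. z + c * of_real s) has_vector_derivative c) (at 0)"
    by (auto intro!: derivative_eq_intros)
  have Dg: "(H has_field_derivative deriv H z) (at ((\<lambda>s::real. z + c * of_real s) 0))"
    using holomorphic_derivI[OF H _ z] by simp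
  from field_vector_diff_chain_at[OF Df Dg] show ?thesis by (simp add: o_def)
qed

lemma grad_sq_holo:
  assumes H: "H holomorphic_on ball 0 1" and z: "z \<in> ball 0 1"
  shows "grad_sq H z = 2 * (cmod (deriv H z))\<^sup>2"
proof -
  have a: "vector_derivative (\<lambda>s::real. H (z + of_real s)) (at 0) = deriv H z"
    using vector_derivative_at[OF vd_line[OF H z, of 1]] by simp
  have b: "vector_derivative (\<lambda>s::real. H (z + \<i> * of_real s)) (at 0) = \<i> * deriv H z"
    using vector_derivative_at[OF vd_line[OF H z, of \<i>]] by simp
  show ?thesis unfolding grad_sq_def a b by (simp add: norm_mult)
qed

lemma grad_sq_antiholo:
  assumes H: "(\<lambda>z. cnj (F z)) holomorphic_on ball 0 1" and z: "z \<in> ball 0 1"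
  shows "grad_sq F z = 2 * (cmod (deriv (\<lambda>z. cnj (F z)) z))\<^sup>2"
proof -
  let ?G = "\<lambda>z. cnj (F z)"
  have a: "vector_derivative (\<lambda>s::real. F (z + of_real s)) (at 0) = cnj (deriv ?G z)"
    using vector_derivative_at[OF has_vector_derivative_cnj[OF vd_line[OF H z, of 1]]] by simp
  have b: "vector_derivative (\<lambda>s::real. F (z + \<i> * of_real s)) (at 0) = cnj (\<i> * deriv ?G z)"
    using vector_derivative_at[OF has_vector_derivative_cnj[OF vd_line[OF H z, of \<i>]]] by simp
  show ?thesis unfolding grad_sq_def a b by (simp add: norm_mult)
qed

lemma grad_sq_obtain:
  assumes "F holomorphic_on ball 0 1 \<or> (\<lambda>z. cnj (F z)) holomorphic_on ball 0 1"
  obtains H where "H holomorphic_on ball 0 1" "\<And>z. z \<in> ball 0 1 \<Longrightarrow> grad_sq F z = 2 * (cmod (deriv H z))\<^sup>2"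
  using assms grad_sq_holo grad_sq_antiholo by blast

lemma q_meas:
  assumes H: "H holomorphic_on ball 0 1"
  shows "(\<lambda>z. indicator (ball 0 1) z * (2 * (cmod (deriv H z))\<^sup>2)) \<in> borel_measurable borel"
proof -
  have "continuous_on (ball 0 1) (\<lambda>z. 2 * (cmod (deriv H z))\<^sup>2)"
    using holomorphic_deriv[OF H] by (intro continuous_intros holomorphic_on_imp_continuous_on) auto
  from borel_measurable_continuous_on_indicator[OF _ this] show ?thesis by simp
qed

lemma q_bounded:
  assumes H: "H holomorphic_on ball 0 1"
  obtains B where "\<And>z. z \<in> cball 0 (1/2) \<Longrightarrow> 2 * (cmod (deriv H z))\<^sup>2 \<le> B"
proof -
  have "continuous_on (cball 0 (1/2)) (\<lambda>z. 2 * (cmod (deriv H z))\<^sup>2)"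
    using holomorphic_deriv[OF H] 
    by (intro continuous_intros holomorphic_on_imp_continuous_on) (auto intro: holomorphic_on_subset)
  then have "compact ((\<lambda>z. 2 * (cmod (deriv H z))\<^sup>2) ` cball 0 (1/2))"
    by (intro compact_continuous_image) auto
  then have "bounded ((\<lambda>z. 2 * (cmod (deriv H z))\<^sup>2) ` cball 0 (1/2))" by (rule compact_imp_bounded)
  then obtain B where "\<And>z. z \<in> cball 0 (1/2) \<Longrightarrow> norm (2 * (cmod (deriv H z))\<^sup>2) \<le> B"
    unfolding bounded_iff by blast
  then show ?thesis using that by force
qed



lemma ball_sets[measurable]: "ball (0::complex) 1 \<in> sets borel" by simp
lemma area_meas[measurable]: "(\<lambda>z. indicator (ball (0::complex) 1) z / ennreal pi) \<in> borel_measurable borel"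
  by measurable

lemma sets_area[simp, measurable_cong]: "sets area_disc = sets borel"
  unfolding area_disc_def by simp

lemma space_area[simp]: "space area_disc = UNIV"
  unfolding area_disc_def by simp

lemma AE_area_ball: "AE z in area_disc. z \<in> ball 0 1"
  unfolding area_disc_def
  by (subst AE_density) (auto simp: indicator_def)

lemma AE_area_nz: "AE z in area_disc. z \<noteq> 0"
  unfolding area_disc_def
  by (subst AE_density) (auto intro: eventually_mono[OF AE_lborel_singleton[of 0]])

lemma inv_pi_ennreal: "1 / ennreal pi = ennreal (1 / pi)"
  using divide_ennreal[of 1 pi] by simp

lemma lborel_cball_complex: "r \<ge> 0 \<Longrightarrow> emeasure lborel (cball (0::complex) r) = ennreal (pi * r^2)"
  apply (subst emeasure_cball) apply (simp add: DIM_complex)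
  using unit_ball_vol_2 apply simp
  done

lemma area_cball: "emeasure area_disc (cball 0 r) \<le> ennreal (r\<^sup>2)"
proof (cases "r \<ge> 0")
  case True
  have "emeasure area_disc (cball 0 r) = (\<integral>\<^sup>+ z. indicator (ball (0::complex) 1) z / ennreal pi * indicator (cball 0 r) z \<partial>lborel)"
    unfolding area_disc_def by (subst emeasure_density) auto
  also have "\<dots> \<le> (\<integral>\<^sup>+ z. ennreal (1/pi) * indicator (cball (0::complex) r) z \<partial>lborel)"
    by (intro nn_integral_mono) (auto simp: indicator_def inv_pi_ennreal)
  also have "\<dots> = ennreal (1/pi) * emeasure lborel (cball (0::complex) r)"
    by (rule nn_integral_cmult_indicator) auto
  also have "\<dots> = ennreal (1/pi) * ennreal (pi * r^2)"
    using lborel_cball_complex[OF True] by simp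
  also have "\<dots> = ennreal (r\<^sup>2)"
    by (subst ennreal_mult[symmetric]) auto
  finally show ?thesis .
next
  case False
  then show ?thesis by simp
qed

lemma ln_lower: assumes "0 < (r::real)" "r < 1" shows "1 - r\<^sup>2 \<le> 2 * ln (1 / r)"
proof -
  have "ln r \<le> r - 1" using ln_le_minus_one assms by simp
  then have "1 - r \<le> ln (1/r)" using assms by (simp add: ln_div)
  moreover have e: "2 * (1 - r) - (1 - r\<^sup>2) = (1 - r)\<^sup>2" by (simp add: power2_eq_square algebra_simps)
  have "1 - r\<^sup>2 \<le> 2 * (1 - r)" using e by (metis diff_ge_0_iff_ge zero_le_power2)
  ultimately show ?thesis by (smt (verit))
qed

lemma ln_upper: assumes "1/2 \<le> (r::real)" "r < 1" shows "ln (1 / r) \<le> 2 * (1 - r\<^sup>2)"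
proof -
  have "ln (1/r) \<le> 1/r - 1" using ln_le_minus_one[of "1/r"] assms by simp
  also have "\<dots> = (1 - r) / r" using assms by (simp add: field_simps)
  also have "\<dots> \<le> (1 - r) / (1/2)" using assms by (intro divide_left_mono) auto
  also have "\<dots> \<le> 2 * (1 - r\<^sup>2)"
  proof -
    have "r * r \<le> 1 * r" using assms by (intro mult_right_mono) auto
    then show ?thesis by (simp add: power2_eq_square)
  qed
  finally show ?thesis .
qed

lemma ln_pos: assumes "0 < (r::real)" "r < 1" shows "0 < ln (1 / r)"
  using assms by simp



lemma cball_sets[measurable]: "cball (0::complex) r \<in> sets borel" by simp
lemma meas_area_iff: "f \<in> borel_measurable area_disc \<longleftrightarrow> f \<in> borel_measurable borel"
  by (subst measurable_cong_sets[OF sets_area refl]) (rule refl)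

lemma log_pointwise:
  assumes z: "\<zeta> \<noteq> 0"
  shows "ennreal (ln (1 / cmod \<zeta>)) * indicator (cball 0 (1/2)) \<zeta>
    \<le> (\<Sum>k. ennreal (ln 2) * indicator (cball 0 ((1/2)^k)) \<zeta>)"
proof (cases "\<zeta> \<in> cball 0 (1/2)")
  case False then show ?thesis by simp
next
  case True
  define r where "r = cmod \<zeta>"
  have r0: "0 < r" using z r_def by simp
  have r1: "r \<le> 1/2" using True r_def by simp
  have lg1: "1 \<le> log 2 (1/r)"
    using r0 r1 by (subst le_log_iff) (auto simp: field_simps)
  define m where "m = nat \<lfloor>log 2 (1/r)\<rfloor>"
  have mle: "real m \<le> log 2 (1/r)" using lg1 m_def by linarith
  have mlt: "log 2 (1/r) < real m + 1" using lg1 m_def by linarith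
  have pm: "2 ^ m \<le> 1 / r"
    using mle r0 by (subst (asm) le_log_iff) (auto simp: powr_realpow)
  have ink: "\<zeta> \<in> cball 0 ((1/2)^k)" if "k < Suc m" for k
  proof -
    have "(2::real) ^ k \<le> 2 ^ m" using that by (intro power_increasing) auto
    then have "2 ^ k \<le> 1 / r" using pm by linarith
    then have "r \<le> 1 / 2 ^ k" using r0 by (simp add: field_simps)
    then show ?thesis using r_def by (simp add: power_one_over)
  qed
  have "ln (1/r) = log 2 (1/r) * ln 2" by (simp add: log_def)
  also have "\<dots> \<le> (real m + 1) * ln 2" using mlt by (intro mult_right_mono) auto
  finally have lnb: "ln (1/r) \<le> (real m + 1) * ln 2" .
  have "ennreal (ln (1 / cmod \<zeta>)) * indicator (cball 0 (1/2)) \<zeta> = ennreal (ln (1/r))"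
    using True r_def by simp
  also have "\<dots> \<le> ennreal ((real m + 1) * ln 2)" using lnb by (rule ennreal_leI)
  also have "\<dots> = (\<Sum>k<Suc m. ennreal (ln 2) * indicator (cball 0 ((1/2)^k)) \<zeta>)"
    using ink by (simp add: ennreal_mult ennreal_of_nat_eq_real_of_nat[symmetric] add.commute)
  also have "\<dots> \<le> (\<Sum>k. ennreal (ln 2) * indicator (cball 0 ((1/2)^k)) \<zeta>)"
    by (rule sum_le_suminf) auto
  finally show ?thesis .
qed

lemma log_int_bound:
  "(\<integral>\<^sup>+\<zeta>. ennreal (ln (1 / cmod \<zeta>)) * indicator (cball 0 (1/2)) \<zeta> \<partial>area_disc) \<le> ennreal (4/3 * ln 2)"
proof -
  have "(\<integral>\<^sup>+\<zeta>. ennreal (ln (1 / cmod \<zeta>)) * indicator (cball 0 (1/2)) \<zeta> \<partial>area_disc)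
      \<le> (\<integral>\<^sup>+\<zeta>. (\<Sum>k. ennreal (ln 2) * indicator (cball 0 ((1/2)^k)) \<zeta>) \<partial>area_disc)"
    by (rule nn_integral_mono_AE, rule eventually_mono[OF AE_area_nz], rule log_pointwise)
  also have "\<dots> = (\<Sum>k. \<integral>\<^sup>+\<zeta>. ennreal (ln 2) * indicator (cball 0 ((1/2)^k)) \<zeta> \<partial>area_disc)"
    by (rule nn_integral_suminf) (simp add: meas_area_iff)
  also have "\<dots> = (\<Sum>k. ennreal (ln 2) * emeasure area_disc (cball 0 ((1/2)^k)))"
    by (subst nn_integral_cmult_indicator) auto
  also have "\<dots> \<le> (\<Sum>k. ennreal (ln 2) * ennreal (((1/2)^k)\<^sup>2))"
    by (intro suminf_le mult_left_mono area_cball) auto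
  also have "\<dots> = (\<Sum>k. ennreal (ln 2 * (1/4)^k))"
    by (simp add: ennreal_mult power_mult_distrib[symmetric] power_even_eq[symmetric] power2_eq_square power_mult[symmetric] mult.commute)
  also have "\<dots> = ennreal (\<Sum>k. ln 2 * (1/4)^k)"
    by (rule suminf_ennreal2) (auto intro!: summable_mult summable_geometric)
  also have "(\<Sum>k. ln 2 * (1/4::real)^k) = 4/3 * ln 2"
    by (subst suminf_mult) (auto simp: suminf_geometric summable_geometric)
  finally show ?thesis .
qed



lemma core:
  fixes q Lam U :: "complex \<Rightarrow> real"
  assumes qm[measurable]: "q \<in> borel_measurable borel" and q0: "\<And>\<zeta>. 0 \<le> q \<zeta>"
    and Lm[measurable]: "Lam \<in> borel_measurable borel" and L0: "\<And>\<zeta>. \<zeta> \<in> ball 0 1 \<Longrightarrow> 0 \<le> Lam \<zeta>"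
    and qB: "\<And>\<zeta>. \<zeta> \<in> cball 0 (1/2) \<Longrightarrow> q \<zeta> \<le> B"
    and LL: "\<And>\<zeta>. \<zeta> \<in> cball 0 (1/2) \<Longrightarrow> Lam \<zeta> \<le> L"
    and U0: "\<And>z. z \<in> ball 0 1 \<Longrightarrow> 0 \<le> U z"
    and Ulow: "0 < U 0 \<Longrightarrow> (\<And>z. z \<in> ball 0 1 \<Longrightarrow> (1 - cmod z) / 2 * U 0 \<le> U z)"
  shows "(\<exists>C. \<forall>z\<in>ball 0 1. (\<integral>\<^sup>+\<zeta>. ennreal (q \<zeta> * ln (1 / cmod \<zeta>)) * (ennreal (poisson_kernel z \<zeta> * Lam \<zeta>) * indicator (ball 0 1) \<zeta>) \<partial>area_disc) \<le> ennreal (C * U z))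
     \<longleftrightarrow> (\<exists>C. \<forall>z\<in>ball 0 1. (\<integral>\<^sup>+\<zeta>. ennreal (q \<zeta> * (1 - (cmod \<zeta>)\<^sup>2)) * (ennreal (poisson_kernel z \<zeta> * Lam \<zeta>) * indicator (ball 0 1) \<zeta>) \<partial>area_disc) \<le> ennreal (C * U z))"
    (is "(\<exists>C. \<forall>z\<in>ball 0 1. ?I1 z \<le> _) \<longleftrightarrow> (\<exists>C. \<forall>z\<in>ball 0 1. ?I2 z \<le> _)")
proof -
  define X where "X z \<zeta> = ennreal (poisson_kernel z \<zeta> * Lam \<zeta>) * indicator (ball 0 1) \<zeta>" for z \<zeta>
  define h1 where "h1 \<zeta> = ennreal (q \<zeta> * ln (1 / cmod \<zeta>))" for \<zeta>
  define h2 where "h2 \<zeta> = ennreal (q \<zeta> * (1 - (cmod \<zeta>)\<^sup>2))" for \<zeta>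
  have pkm[measurable]: "(\<lambda>\<zeta>. poisson_kernel z \<zeta>) \<in> borel_measurable borel" for z by (rule meas_pk)
  have Xm: "X z \<in> borel_measurable area_disc" for z
    unfolding meas_area_iff X_def[abs_def] by measurable
  have h1m: "(\<lambda>\<zeta>. h1 \<zeta> * X z \<zeta>) \<in> borel_measurable area_disc" for z
    unfolding meas_area_iff X_def h1_def by measurable
  have h2m: "(\<lambda>\<zeta>. h2 \<zeta> * X z \<zeta>) \<in> borel_measurable area_disc" for z
    unfolding meas_area_iff X_def h2_def by measurable
  have I1: "?I1 z = (\<integral>\<^sup>+\<zeta>. h1 \<zeta> * X z \<zeta> \<partial>area_disc)" for z unfolding h1_def X_def ..
  have I2: "?I2 z = (\<integral>\<^sup>+\<zeta>. h2 \<zeta> * X z \<zeta> \<partial>area_disc)" for z unfolding h2_def X_def ..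
  have AEgood: "AE \<zeta> in area_disc. \<zeta> \<in> ball 0 1 \<and> \<zeta> \<noteq> 0"
    using AE_area_ball AE_area_nz by eventually_elim auto
  show ?thesis unfolding I1 I2
  proof
    assume "\<exists>C. \<forall>z\<in>ball 0 1. (\<integral>\<^sup>+\<zeta>. h1 \<zeta> * X z \<zeta> \<partial>area_disc) \<le> ennreal (C * U z)"
    then obtain C where C: "\<And>z. z \<in> ball 0 1 \<Longrightarrow> (\<integral>\<^sup>+\<zeta>. h1 \<zeta> * X z \<zeta> \<partial>area_disc) \<le> ennreal (C * U z)"
      by blast
    show "\<exists>C. \<forall>z\<in>ball 0 1. (\<integral>\<^sup>+\<zeta>. h2 \<zeta> * X z \<zeta> \<partial>area_disc) \<le> ennreal (C * U z)"
    proof (intro exI[of _ "2 * C"] ballI)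
      fix z :: complex assume z: "z \<in> ball 0 1"
      have "(\<integral>\<^sup>+\<zeta>. h2 \<zeta> * X z \<zeta> \<partial>area_disc) \<le> (\<integral>\<^sup>+\<zeta>. 2 * (h1 \<zeta> * X z \<zeta>) \<partial>area_disc)"
      proof (rule nn_integral_mono_AE, rule eventually_mono[OF AEgood])
        fix \<zeta> :: complex assume \<zeta>: "\<zeta> \<in> ball 0 1 \<and> \<zeta> \<noteq> 0"
        have r: "0 < cmod \<zeta>" "cmod \<zeta> < 1" using \<zeta> by auto
        have "q \<zeta> * (1 - (cmod \<zeta>)\<^sup>2) \<le> q \<zeta> * (2 * ln (1 / cmod \<zeta>))"
          by (rule mult_left_mono[OF ln_lower[OF r] q0])
        then have "ennreal (q \<zeta> * (1 - (cmod \<zeta>)\<^sup>2)) \<le> ennreal (2 * (q \<zeta> * ln (1 / cmod \<zeta>)))"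
          by (intro ennreal_leI) (simp add: algebra_simps)
        also have "\<dots> = 2 * ennreal (q \<zeta> * ln (1 / cmod \<zeta>))" by (simp add: ennreal_mult')
        finally have "h2 \<zeta> \<le> 2 * h1 \<zeta>" unfolding h1_def h2_def .
        then show "h2 \<zeta> * X z \<zeta> \<le> 2 * (h1 \<zeta> * X z \<zeta>)"
          by (metis mult.assoc mult_right_mono zero_le)
      qed
      also have "\<dots> = 2 * (\<integral>\<^sup>+\<zeta>. h1 \<zeta> * X z \<zeta> \<partial>area_disc)"
        by (rule nn_integral_cmult[OF h1m])
      also have "\<dots> \<le> 2 * ennreal (C * U z)" using C[OF z] by (rule mult_left_mono) simp
      also have "\<dots> = ennreal (2 * C * U z)"
        by (simp add: ennreal_mult' mult.assoc)
      finally show "(\<integral>\<^sup>+\<zeta>. h2 \<zeta> * X z \<zeta> \<partial>area_disc) \<le> ennreal (2 * C * U z)" .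
    qed
  next
    assume "\<exists>C. \<forall>z\<in>ball 0 1. (\<integral>\<^sup>+\<zeta>. h2 \<zeta> * X z \<zeta> \<partial>area_disc) \<le> ennreal (C * U z)"
    then obtain C where C: "\<And>z. z \<in> ball 0 1 \<Longrightarrow> (\<integral>\<^sup>+\<zeta>. h2 \<zeta> * X z \<zeta> \<partial>area_disc) \<le> ennreal (C * U z)"
      by blast
    show "\<exists>C. \<forall>z\<in>ball 0 1. (\<integral>\<^sup>+\<zeta>. h1 \<zeta> * X z \<zeta> \<partial>area_disc) \<le> ennreal (C * U z)"
    proof (cases "U 0 > 0")
      case False
      then have U00: "U 0 = 0" using U0[of 0] by simp
      have "(\<integral>\<^sup>+\<zeta>. h2 \<zeta> * X 0 \<zeta> \<partial>area_disc) \<le> 0" using C[of 0] U00 by simp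
      then have "(\<integral>\<^sup>+\<zeta>. h2 \<zeta> * X 0 \<zeta> \<partial>area_disc) = 0" by simp
      then have AE0: "AE \<zeta> in area_disc. h2 \<zeta> * X 0 \<zeta> = 0"
        using nn_integral_0_iff_AE[OF h2m] by simp
      show ?thesis
      proof (intro exI[of _ 0] ballI)
        fix z :: complex assume z: "z \<in> ball 0 1"
        have "AE \<zeta> in area_disc. h1 \<zeta> * X z \<zeta> = 0"
          using AE0 AEgood
        proof eventually_elim
          case (elim \<zeta>)
          have r: "0 < cmod \<zeta>" "cmod \<zeta> < 1" using elim by auto
          have pos: "0 < 1 - (cmod \<zeta>)\<^sup>2" using r by (simp add: power_less_one_iff abs_square_less_1)
          from elim have "q \<zeta> * (1 - (cmod \<zeta>)\<^sup>2) \<le> 0 \<or> Lam \<zeta> \<le> 0"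
            unfolding h2_def X_def by (auto simp: ennreal_eq_0_iff)
          then show ?case
          proof
            assume "q \<zeta> * (1 - (cmod \<zeta>)\<^sup>2) \<le> 0"
            then have "q \<zeta> = 0" using pos q0[of \<zeta>] by (simp add: mult_le_0_iff)
            then show ?thesis unfolding h1_def by simp
          next
            assume "Lam \<zeta> \<le> 0"
            then have "Lam \<zeta> = 0" using L0[of \<zeta>] elim by simp
            then show ?thesis unfolding X_def by simp
          qed
        qed
        then have "(\<integral>\<^sup>+\<zeta>. h1 \<zeta> * X z \<zeta> \<partial>area_disc) = 0"
          using nn_integral_0_iff_AE[OF h1m] by simp
        then show "(\<integral>\<^sup>+\<zeta>. h1 \<zeta> * X z \<zeta> \<partial>area_disc) \<le> ennreal (0 * U z)" by simp
      qed
    next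
      case True
      have B0: "0 \<le> B" using qB[of 0] q0[of 0] by simp
      have L00: "0 \<le> L" using LL[of 0] L0[of 0] by simp
      define c where "c = 4/3 * ln (2::real)"
      have c0: "0 \<le> c" unfolding c_def by simp
      define C' where "C' = 2 * max C 0 + 16 * B * L * c / U 0"
      show ?thesis
      proof (intro exI[of _ C'] ballI)
        fix z :: complex assume z: "z \<in> ball 0 1"
        have zn: "cmod z < 1" using z by simp
        define K where "K = 8 * (1 - cmod z) * B * L"
        have K0: "0 \<le> K" unfolding K_def using zn B0 L00 by simp
        define G where "G \<zeta> = ennreal (ln (1 / cmod \<zeta>)) * indicator (cball 0 (1/2)) \<zeta>" for \<zeta> :: complex
        have Gm: "G \<in> borel_measurable area_disc"
          unfolding meas_area_iff G_def[abs_def] by measurable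
        have "(\<integral>\<^sup>+\<zeta>. h1 \<zeta> * X z \<zeta> \<partial>area_disc) \<le> (\<integral>\<^sup>+\<zeta>. 2 * (h2 \<zeta> * X z \<zeta>) + ennreal K * G \<zeta> \<partial>area_disc)"
        proof (rule nn_integral_mono_AE, rule eventually_mono[OF AEgood])
          fix \<zeta> :: complex assume \<zeta>: "\<zeta> \<in> ball 0 1 \<and> \<zeta> \<noteq> 0"
          have r: "0 < cmod \<zeta>" "cmod \<zeta> < 1" using \<zeta> by auto
          show "h1 \<zeta> * X z \<zeta> \<le> 2 * (h2 \<zeta> * X z \<zeta>) + ennreal K * G \<zeta>"
          proof (cases "cmod \<zeta> \<le> 1/2")
            case False
            have "q \<zeta> * ln (1 / cmod \<zeta>) \<le> q \<zeta> * (2 * (1 - (cmod \<zeta>)\<^sup>2))"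
              using False r by (intro mult_left_mono[OF ln_upper q0]) auto
            then have "ennreal (q \<zeta> * ln (1 / cmod \<zeta>)) \<le> ennreal (2 * (q \<zeta> * (1 - (cmod \<zeta>)\<^sup>2)))"
              by (intro ennreal_leI) (simp add: algebra_simps)
            also have "\<dots> = 2 * ennreal (q \<zeta> * (1 - (cmod \<zeta>)\<^sup>2))" by (simp add: ennreal_mult')
            finally have "h1 \<zeta> \<le> 2 * h2 \<zeta>" unfolding h1_def h2_def .
            then have "h1 \<zeta> * X z \<zeta> \<le> 2 * (h2 \<zeta> * X z \<zeta>)"
              by (metis mult.assoc mult_right_mono zero_le)
            then show ?thesis by (rule order_trans) simp
          next
            case True
            have inc: "\<zeta> \<in> cball 0 (1/2)" using True by simp
            have lnp: "0 \<le> ln (1 / cmod \<zeta>)" using r by simp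
            have Pn: "0 \<le> poisson_kernel z \<zeta>" using pk_nonneg[of z \<zeta>] zn by simp
            have Ln: "0 \<le> Lam \<zeta>" using L0 \<zeta> by simp
            have a: "q \<zeta> * ln (1 / cmod \<zeta>) \<le> B * ln (1 / cmod \<zeta>)"
              by (rule mult_right_mono[OF qB[OF inc] lnp])
            have b: "poisson_kernel z \<zeta> * Lam \<zeta> \<le> (8 * (1 - cmod z)) * L"
              by (rule mult_mono[OF pk_upper_small[OF zn] LL[OF inc]]) (use True zn Ln in auto)
            have "(q \<zeta> * ln (1 / cmod \<zeta>)) * (poisson_kernel z \<zeta> * Lam \<zeta>) \<le> (B * ln (1 / cmod \<zeta>)) * ((8 * (1 - cmod z)) * L)"
              by (rule mult_mono[OF a b]) (use B0 lnp Pn Ln in auto)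
            also have "\<dots> = K * ln (1 / cmod \<zeta>)" unfolding K_def by simp
            finally have ineq: "(q \<zeta> * ln (1 / cmod \<zeta>)) * (poisson_kernel z \<zeta> * Lam \<zeta>) \<le> K * ln (1 / cmod \<zeta>)" .
            have "h1 \<zeta> * X z \<zeta> = ennreal ((q \<zeta> * ln (1 / cmod \<zeta>)) * (poisson_kernel z \<zeta> * Lam \<zeta>))"
            proof -
              have "h1 \<zeta> * X z \<zeta> = ennreal (q \<zeta> * ln (1 / cmod \<zeta>)) * ennreal (poisson_kernel z \<zeta> * Lam \<zeta>)"
                unfolding h1_def X_def using \<zeta> by simp
              also have "\<dots> = ennreal ((q \<zeta> * ln (1 / cmod \<zeta>)) * (poisson_kernel z \<zeta> * Lam \<zeta>))"
                by (rule ennreal_mult'[symmetric]) (use q0[of \<zeta>] lnp in simp)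
              finally show ?thesis .
            qed
            also have "\<dots> \<le> ennreal (K * ln (1 / cmod \<zeta>))" by (rule ennreal_leI[OF ineq])
            also have "\<dots> = ennreal K * G \<zeta>" unfolding G_def using inc K0 by (simp add: ennreal_mult')
            finally show ?thesis by (rule order_trans) simp
          qed
        qed
        also have "\<dots> = 2 * (\<integral>\<^sup>+\<zeta>. h2 \<zeta> * X z \<zeta> \<partial>area_disc) + ennreal K * (\<integral>\<^sup>+\<zeta>. G \<zeta> \<partial>area_disc)"
          using h2m Gm by (simp add: nn_integral_add nn_integral_cmult)
        also have "\<dots> \<le> 2 * ennreal (C * U z) + ennreal K * ennreal c"
          using C[OF z] log_int_bound unfolding G_def c_def
          by (intro add_mono mult_left_mono) auto
        also have "\<dots> \<le> ennreal (2 * max C 0 * U z + K * c)"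
        proof -
          have "2 * ennreal (C * U z) \<le> ennreal (2 * max C 0 * U z)"
          proof -
            have "2 * ennreal (C * U z) = ennreal (2 * (C * U z))" by (simp add: ennreal_mult')
            also have "\<dots> \<le> ennreal (2 * max C 0 * U z)"
              using U0[OF z] by (intro ennreal_leI) (simp add: mult_right_mono)
            finally show ?thesis .
          qed
          moreover have "ennreal K * ennreal c = ennreal (K * c)" using K0 by (simp add: ennreal_mult')
          ultimately have "2 * ennreal (C * U z) + ennreal K * ennreal c \<le> ennreal (2 * max C 0 * U z) + ennreal (K * c)"
            by simp
          also have "\<dots> = ennreal (2 * max C 0 * U z + K * c)"
            using U0[OF z] K0 c0 by (simp add: ennreal_plus)
          finally show ?thesis .
        qed
        also have "\<dots> \<le> ennreal (C' * U z)"
        proof (rule ennreal_leI)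
          have ul: "(1 - cmod z) / 2 * U 0 \<le> U z" by (rule Ulow[OF True z])
          have "K * c = 8 * B * L * c * (1 - cmod z)" unfolding K_def by simp
          also have "\<dots> \<le> 8 * B * L * c * (2 * U z / U 0)"
          proof (rule mult_left_mono)
            show "1 - cmod z \<le> 2 * U z / U 0" using ul True by (simp add: field_simps)
            show "0 \<le> 8 * B * L * c" using B0 L00 c0 by simp
          qed
          also have "\<dots> = 16 * B * L * c / U 0 * U z" by simp
          finally show "2 * max C 0 * U z + K * c \<le> C' * U z"
            unfolding C'_def by (simp add: algebra_simps)
        qed
        finally show "(\<integral>\<^sup>+\<zeta>. h1 \<zeta> * X z \<zeta> \<partial>area_disc) \<le> ennreal (C' * U z)" .
      qed
    qed
  qed
qed



lemma dens_eq:
  assumes "\<And>z. z \<in> ball 0 1 \<Longrightarrow> f z = g z"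
  shows "density area_disc f = density area_disc g"
proof -
  have "(\<lambda>A. \<integral>\<^sup>+x. f x * indicator A x \<partial>area_disc) = (\<lambda>A. \<integral>\<^sup>+x. g x * indicator A x \<partial>area_disc)"
    by (intro ext nn_integral_cong_AE eventually_mono[OF AE_area_ball]) (simp add: assms)
  then show ?thesis unfolding density_def by simp
qed



theorem proposition4p2:
  fixes mu lam :: "complex \<Rightarrow> real" and \<phi> :: "complex \<Rightarrow> complex"
  assumes "A2_weight mu" and "A2_weight lam"
    and "L1_circle \<phi>"
    and "poisson_ext \<phi> holomorphic_on ball 0 1 \<or>
         (\<lambda>z. cnj (poisson_ext \<phi> z)) holomorphic_on ball 0 1"
  shows "carleson lam mu
           (density area_disc (\<lambda>z. ennreal (grad_sq (poisson_ext \<phi>) z * ln (1 / cmod z))))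
     \<longleftrightarrow> carleson lam mu
           (density area_disc (\<lambda>z. ennreal (grad_sq (poisson_ext \<phi>) z * (1 - (cmod z)\<^sup>2))))"
proof -
  have mum[measurable]: "(\<lambda>t. mu (cis t)) \<in> borel_measurable lborel" and mu0: "\<And>t. 0 \<le> mu (cis t)"
    using assms(1) unfolding A2_weight_def by auto
  have lamm[measurable]: "(\<lambda>t. lam (cis t)) \<in> borel_measurable lborel" and lam0: "\<And>t. 0 \<le> lam (cis t)"
    using assms(2) unfolding A2_weight_def by auto
  obtain H where H: "H holomorphic_on ball 0 1"
    and gH: "\<And>z. z \<in> ball 0 1 \<Longrightarrow> grad_sq (poisson_ext \<phi>) z = 2 * (cmod (deriv H z))\<^sup>2"
    using grad_sq_obtain[OF assms(4)] by blast
  define q where "q z = indicator (ball 0 1) z * (2 * (cmod (deriv H z))\<^sup>2)" for z :: complex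
  have qm[measurable]: "q \<in> borel_measurable borel" unfolding q_def[abs_def] by (rule q_meas[OF H])
  have q0: "\<And>\<zeta>. 0 \<le> q \<zeta>" unfolding q_def by simp
  obtain B where B: "\<And>z. z \<in> cball 0 (1/2) \<Longrightarrow> 2 * (cmod (deriv H z))\<^sup>2 \<le> B"
    using q_bounded[OF H] by blast
  have qB: "\<And>\<zeta>. \<zeta> \<in> cball 0 (1/2) \<Longrightarrow> q \<zeta> \<le> B"
    unfolding q_def using B by (auto simp: indicator_def)
  let ?Lam = "poisson_ext lam" and ?U = "poisson_ext mu"
  have Lm[measurable]: "?Lam \<in> borel_measurable borel" by (rule meas_pext[OF lamm])
  have Um[measurable]: "?U \<in> borel_measurable borel" by (rule meas_pext[OF mum])
  have L0: "\<And>\<zeta>. \<zeta> \<in> ball 0 1 \<Longrightarrow> 0 \<le> ?Lam \<zeta>"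
    using pext_nonneg[of lam, OF lam0] by simp
  have LL: "\<And>\<zeta>. \<zeta> \<in> cball 0 (1/2) \<Longrightarrow> ?Lam \<zeta> \<le> 4 * ?Lam 0"
    by (rule pext_compare[OF lamm lam0]) (auto intro: pk_circle_upper)
  have U0: "\<And>z. z \<in> ball 0 1 \<Longrightarrow> 0 \<le> ?U z"
    using pext_nonneg[of mu, OF mu0] by simp
  have Ulow: "(1 - cmod z) / 2 * ?U 0 \<le> ?U z" if z: "z \<in> ball 0 1" for z
  proof -
    have zn: "cmod z < 1" using z by simp
    have "?U 0 \<le> 2 / (1 - cmod z) * ?U z"
    proof (rule pext_compare[OF mum mu0])
      fix t
      have "(1 - cmod z) / 2 \<le> poisson_kernel z (cis t)" by (rule pk_circle_lower[OF zn])
      then show "poisson_kernel 0 (cis t) \<le> 2 / (1 - cmod z) * poisson_kernel z (cis t)"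
        using zn by (simp add: field_simps)
    qed (use zn in auto)
    then show ?thesis using zn by (simp add: field_simps)
  qed
  have dens1: "density area_disc (\<lambda>z. ennreal (grad_sq (poisson_ext \<phi>) z * ln (1 / cmod z)))
      = density area_disc (\<lambda>z. ennreal (q z * ln (1 / cmod z)))"
    by (rule dens_eq) (simp add: gH q_def)
  have dens2: "density area_disc (\<lambda>z. ennreal (grad_sq (poisson_ext \<phi>) z * (1 - (cmod z)\<^sup>2)))
      = density area_disc (\<lambda>z. ennreal (q z * (1 - (cmod z)\<^sup>2)))"
    by (rule dens_eq) (simp add: gH q_def)
  have pkm[measurable]: "(\<lambda>\<zeta>. poisson_kernel z \<zeta>) \<in> borel_measurable borel" for z by (rule meas_pk)
  have unf: "carleson lam mu (density area_disc h) \<longleftrightarrow>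
    (\<exists>C. \<forall>z\<in>ball 0 1. (\<integral>\<^sup>+\<zeta>. h \<zeta> * (ennreal (poisson_kernel z \<zeta> * ?Lam \<zeta>) * indicator (ball 0 1) \<zeta>) \<partial>area_disc) \<le> ennreal (C * ?U z))"
    if hm: "h \<in> borel_measurable borel" for h
  proof -
    have "(\<integral>\<^sup>+\<zeta>\<in>ball 0 1. ennreal (poisson_kernel z \<zeta> * ?Lam \<zeta>) \<partial>density area_disc h)
        = (\<integral>\<^sup>+\<zeta>. h \<zeta> * (ennreal (poisson_kernel z \<zeta> * ?Lam \<zeta>) * indicator (ball 0 1) \<zeta>) \<partial>area_disc)" for z
      by (rule nn_integral_density) (use hm in \<open>simp_all add: meas_area_iff\<close>)
    then show ?thesis unfolding carleson_def by simp
  qed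
  show ?thesis
    unfolding dens1 dens2
    apply (subst unf, measurable)
    apply (subst unf, measurable)
    apply (rule core[OF qm q0 Lm L0 qB LL U0 Ulow])
    apply auto
    done
qed

end
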